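(* Let $\psi\in\mathscr D(\mathscr L)$ be real-valued, non-negative and non-decreasing on $(0,\infty)$. Let $s_0>0$ be real and let $s\in\mathbb C$ with $0<\operatorname{Re}(s)<s_0$. Then for every $t>0$, $$\left|\mathscr L\!\left(\psi(u)\frac{u^{s-1}}{\Gamma(s)}\right)(t)\right|\le C_{s,s_0}\,t^{\operatorname{Re}(s_0-s)}\,\mathscr L\!\left(\psi(u)\frac{u^{s_0-1}}{\Gamma(s_0)}\right)(t).$$
   Context: $\mathscr D(\mathscr L)$ is the space of measurable functions $\varphi:(0,\infty)\to\mathbb C$ that are integrable on every interval $(0,R)$, $R>0$, and for which $\int_0^\infty e^{-su}|\varphi(u)|\,du<\infty$ for every $s\in\mathbb C$ with $\operatorname{Re}(s)>0$. For such $\varphi$, $\mathscr L(\varphi)(t)=\int_0^\infty e^{-tu}\varphi(u)\,du$ for $t>0$. For real $s_0>0$ and $0<\operatorname{Re}(s)<s_0$ the constant $C_{s,s_0}$ is $$C_{s,s_0}=\frac{\sinh(\pi\operatorname{Im}(s))}{\pi\operatorname{Im}(s)}\sqrt{\Big(1+\frac{\operatorname{Im}(s)^2}{\operatorname{Re}(s)^2}\Big)\Big(1+\frac{\operatorname{Im}(s)^2}{\operatorname{Re}(s_0-s)^2}\Big)},$$ where the factor $\sinh(\pi y)/(\pi y)$ is interpreted as $1$ when $y=0$. *)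

theory Defs
  imports "HOL-Analysis.Analysis"
begin

definition laplace_domain :: "(real \<Rightarrow> complex) \<Rightarrow> bool" where
  "laplace_domain \<phi> \<longleftrightarrow>
     set_borel_measurable lborel {0<..} \<phi> \<and>
     (\<forall>R>0. set_integrable lborel {0<..<R} \<phi>) \<and>
     (\<forall>s::complex. Re s > 0 \<longrightarrow>
        set_integrable lborel {0<..} (\<lambda>u. exp (- (s * complex_of_real u)) * \<phi> u))"

definition laplace :: "(real \<Rightarrow> 'a::{banach,second_countable_topology}) \<Rightarrow> real \<Rightarrow> 'a" where
  "laplace \<phi> t = (LINT u:{0<..}|lborel. exp (- (t * u)) *\<^sub>R \<phi> u)"

definition sinhc :: "real \<Rightarrow> real" where
  "sinhc y = (if y = 0 then 1 else sinh (pi * y) / (pi * y))"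

definition C_const :: "complex \<Rightarrow> real \<Rightarrow> real" where
  "C_const s s0 = sinhc (Im s) *
     sqrt ((1 + (Im s)\<^sup>2 / (Re s)\<^sup>2) * (1 + (Im s)\<^sup>2 / (Re (complex_of_real s0 - s))\<^sup>2))"

end

theory Submission
  imports Defs
begin



lemma prod_ratio_norm:
  fixes a b :: real and n :: nat
  assumes a: "a > 0"
  defines "s \<equiv> Complex a b"
  shows "(norm (Gamma_series (complex_of_real a) n / Gamma_series s n))^2
       = (\<Prod>k=0..n. 1 + b^2 / (a + real k)^2)"
proof -
  have ps: "pochhammer s (n+1) = (\<Prod>k=0..n. s + of_nat k)" 
    by (simp add: pochhammer_Suc_prod)
  have pa: "pochhammer (complex_of_real a) (n+1) = (\<Prod>k=0..n. complex_of_real a + of_nat k)" 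
    by (simp add: pochhammer_Suc_prod)
  have nz: "\<And>k. complex_of_real a + of_nat k \<noteq> 0" using a
    by (metis add_pos_nonneg of_nat_0_le_iff of_real_0 of_real_eq_iff of_real_of_nat_eq of_real_add less_irrefl)
  have nz2: "\<And>k. s + of_nat k \<noteq> 0" using a unfolding s_def
    by (metis Re_complex_of_real add_pos_nonneg of_nat_0_le_iff less_irrefl complex.sel(1) plus_complex.simps(1) zero_complex.simps(1) Re_complex_of_real of_real_of_nat_eq)
  have e: "norm (exp ((complex_of_real a - s) * of_real (ln (of_nat n)))) = 1"
    unfolding s_def by (simp add: norm_exp_eq_Re)
  have "Gamma_series (complex_of_real a) n / Gamma_series s n
     = exp ((complex_of_real a - s) * of_real (ln (of_nat n))) * pochhammer s (n+1) / pochhammer (complex_of_real a) (n+1)"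
    unfolding Gamma_series_def using nz nz2
    by (simp add: ps pa prod_zero_iff field_simps exp_diff left_diff_distrib)
  hence "norm (Gamma_series (complex_of_real a) n / Gamma_series s n)
      = norm (exp ((complex_of_real a - s) * of_real (ln (of_nat n)))) * norm (pochhammer s (n+1)) / norm (pochhammer (complex_of_real a) (n+1))"
    by (simp only: norm_mult norm_divide)
  also have "\<dots> = (\<Prod>k=0..n. norm (s + of_nat k)) / (\<Prod>k=0..n. norm (complex_of_real a + of_nat k))"
    by (simp only: e ps pa prod_norm mult_1)
  also have "(\<Prod>k=0..n. norm (complex_of_real a + of_nat k)) = (\<Prod>k=0..n. a + real k)"
    using a by (intro prod.cong refl) (metis abs_of_nonneg add_nonneg_nonneg less_imp_le norm_of_real of_nat_0_le_iff of_real_add of_real_of_nat_eq)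
  also have "(\<Prod>k=0..n. norm (s + of_nat k)) / (\<Prod>k=0..n. a + real k) = (\<Prod>k=0..n. norm (s + of_nat k) / (a + real k))"
    by (simp add: prod_dividef)
  also have "\<dots>^2 = (\<Prod>k=0..n. (norm (s + of_nat k) / (a + real k))^2)"
    by (simp add: prod_power_distrib)
  also have "\<dots> = (\<Prod>k=0..n. 1 + b^2 / (a + real k)^2)"
  proof (rule prod.cong[OF refl])
    fix k assume "k \<in> {0..n}"
    have "(norm (s + of_nat k))^2 = (a + real k)^2 + b^2"
      unfolding s_def by (simp add: cmod_def)
    thus "(norm (s + of_nat k) / (a + real k))^2 = 1 + b^2 / (a + real k)^2"
      using a by (simp add: power_divide field_simps)
  qed
  finally show ?thesis .
qed



lemma sinh_product:
  fixes b :: real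
  shows "(\<lambda>n. \<Prod>k=1..n. 1 + b^2 / (real k)^2) \<longlonglongrightarrow> sinhc b"
proof (cases "b = 0")
  case True thus ?thesis by (simp add: sinhc_def)
next
  case False
  have L: "(\<lambda>n. of_real pi * (\<i> * of_real b) * (\<Prod>k=1..n. 1 - (\<i> * of_real b)^2 / of_nat k^2))
      \<longlonglongrightarrow> sin (of_real pi * (\<i> * of_real b))"
    by (rule sin_product_formula_complex)
  have e1: "(\<Prod>k=1..n. 1 - (\<i> * complex_of_real b)^2 / of_nat k^2) = of_real (\<Prod>k=1..n. 1 + b^2 / (real k)^2)" for n
    by (simp add: power_mult_distrib)
  have e2: "sin (of_real pi * (\<i> * of_real b)) = \<i> * of_real (sinh (pi * b))"
  proof -
    have "sin (of_real pi * (\<i> * of_real b)) = sin (\<i> * of_real (pi * b))" by (simp add: mult_ac)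
    also have "\<dots> = \<i> * ((exp (of_real (pi*b)) - inverse (exp (of_real (pi*b)))) / 2)"
      by (rule sin_i_times)
    also have "\<dots> = \<i> * of_real (sinh (pi * b))"
      by (simp add: sinh_def exp_of_real[symmetric] exp_minus of_real_mult[symmetric] del: of_real_mult)
    finally show ?thesis .
  qed
  have "(\<lambda>n. (\<i> * of_real (pi * b)) * of_real (\<Prod>k=1..n. 1 + b^2 / (real k)^2)) \<longlonglongrightarrow> \<i> * of_real (sinh (pi * b))"
  proof -
    have eq: "(\<lambda>n. (\<i> * of_real (pi * b)) * of_real (\<Prod>k=1..n. 1 + b^2 / (real k)^2)) = (\<lambda>n. of_real pi * (\<i> * of_real b) * (\<Prod>k=1..n. 1 - (\<i> * of_real b)^2 / of_nat k^2))"
      by (rule ext) (simp only: e1[symmetric] of_real_mult mult_ac)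
    show ?thesis by (subst eq, subst e2[symmetric], rule L)
  qed
  hence "(\<lambda>n. inverse (\<i> * of_real (pi * b)) * ((\<i> * of_real (pi * b)) * of_real (\<Prod>k=1..n. 1 + b^2 / (real k)^2)))
      \<longlonglongrightarrow> inverse (\<i> * of_real (pi * b)) * (\<i> * of_real (sinh (pi * b)))"
    by (rule tendsto_mult[OF tendsto_const])
  hence "(\<lambda>n. complex_of_real (\<Prod>k=1..n. 1 + b^2 / (real k)^2)) \<longlonglongrightarrow> of_real (sinh (pi * b) / (pi * b))"
    using False by (simp add: field_simps)
  hence "(\<lambda>n. (\<Prod>k=1..n. 1 + b^2 / (real k)^2)) \<longlonglongrightarrow> sinh (pi * b) / (pi * b)"
    by (simp only: tendsto_of_real_iff)
  thus ?thesis using False by (simp add: sinhc_def)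
qed


lemma sinhc_ge1: "sinhc b \<ge> 1"
proof (rule LIMSEQ_le_const[OF sinh_product])
  show "\<exists>N. \<forall>n\<ge>N. 1 \<le> (\<Prod>k=1..n. 1 + b^2 / (real k)^2)"
    by (intro exI[of _ 0] allI impI prod_ge_1) auto
qed

lemma gamma_ratio_bound:
  fixes a b :: real
  assumes a: "a > 0"
  shows "(Gamma a / norm (Gamma (Complex a b)))^2 \<le> (1 + b^2/a^2) * sinhc b"
proof -
  define s where "s = Complex a b"
  have snp: "s \<notin> \<int>\<^sub>\<le>\<^sub>0" using a unfolding s_def
    by (auto elim!: nonpos_Ints_cases simp: complex_eq_iff)
  have Gs: "Gamma s \<noteq> 0" using snp by (simp add: Gamma_eq_zero_iff)
  have "(\<lambda>n. (norm (Gamma_series (complex_of_real a) n / Gamma_series s n))^2)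
      \<longlonglongrightarrow> (norm (Gamma (complex_of_real a) / Gamma s))^2"
    by (intro tendsto_intros Gs)
  moreover have "(norm (Gamma (complex_of_real a) / Gamma s))^2 = (Gamma a / norm (Gamma s))^2"
    using a by (simp add: Gamma_complex_of_real norm_divide Gamma_real_pos)
  ultimately have L1: "(\<lambda>n. (\<Prod>k=0..n. 1 + b^2 / (a + real k)^2)) \<longlonglongrightarrow> (Gamma a / norm (Gamma s))^2"
    using prod_ratio_norm[OF a, of _ b] unfolding s_def by simp
  have L2: "(\<lambda>n. (1 + b^2/a^2) * (\<Prod>k=1..n. 1 + b^2 / (real k)^2)) \<longlonglongrightarrow> (1 + b^2/a^2) * sinhc b"
    by (intro tendsto_intros sinh_product)
  have le: "(\<Prod>k=0..n. 1 + b^2 / (a + real k)^2) \<le> (1 + b^2/a^2) * (\<Prod>k=1..n. 1 + b^2 / (real k)^2)" for n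
  proof -
    have "(\<Prod>k=0..n. 1 + b^2 / (a + real k)^2) = (1 + b^2/a^2) * (\<Prod>k=1..n. 1 + b^2 / (a + real k)^2)"
      by (simp add: prod.atLeast_Suc_atMost[of 0 n, simplified])
    also have "\<dots> \<le> (1 + b^2/a^2) * (\<Prod>k=1..n. 1 + b^2 / (real k)^2)"
    proof (intro mult_left_mono prod_mono conjI)
      fix k assume k: "k \<in> {1..n}"
      show "0 \<le> 1 + b^2 / (a + real k)^2" by (simp add: add_nonneg_nonneg)
      have "(real k)^2 \<le> (a + real k)^2" using a k by (intro power_mono) auto
      moreover have "(real k)^2 > 0" using k by auto
      ultimately show "1 + b^2 / (a + real k)^2 \<le> 1 + b^2 / (real k)^2"
        by (simp add: frac_le)
    qed (simp add: add_nonneg_nonneg)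
    finally show ?thesis .
  qed
  show ?thesis unfolding s_def[symmetric]
    by (rule LIMSEQ_le[OF L1 L2]) (use le in auto)
qed



lemma gamma_laplace:
  fixes c t :: real
  assumes c: "c > 0" and t: "t > 0"
  shows "integrable lborel (\<lambda>u. indicator {0<..} u * (exp (-(t*u)) * u powr (c-1)))"
    and "integral\<^sup>L lborel (\<lambda>u. indicator {0<..} u * (exp (-(t*u)) * u powr (c-1))) = Gamma c / t powr c"
proof -
  define F where "F x = indicator {0..} x * x powr (c - 1) / exp x" for x :: real
  have Fm: "F \<in> borel_measurable lborel" unfolding F_def by measurable
  have "has_bochner_integral lborel F (Gamma c)"
    using Gamma_conv_nn_integral_real[OF c] Gamma_real_pos[OF c] Fm
    by (intro has_bochner_integral_nn_integral) (auto simp: F_def)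
  hence Fi: "integrable lborel F" and Fv: "integral\<^sup>L lborel F = Gamma c"
    by (auto simp: has_bochner_integral_iff)
  define G where "G u = indicator {0<..} u * (exp (-(t*u)) * u powr (c-1))" for u :: real
  have FG: "F (0 + t * x) = t powr (c - 1) * G x" for x
  proof (cases "x > 0")
    case True thus ?thesis using t by (simp add: F_def G_def powr_mult exp_minus field_simps)
  next
    case False thus ?thesis using t
      by (cases "x = 0") (auto simp: F_def G_def indicator_def zero_le_mult_iff)
  qed
  have i1: "integrable lborel (\<lambda>x. F (0 + t * x))"
    using lborel_integrable_real_affine[OF Fi, of t 0] t by simp
  hence "integrable lborel (\<lambda>x. t powr (1 - c) * F (0 + t * x))" by simp
  moreover have "(\<lambda>x. t powr (1 - c) * F (0 + t * x)) = G"
    using t by (intro ext) (simp only: FG mult.assoc[symmetric] powr_add[symmetric], simp)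
  ultimately have "integrable lborel G" by metis
  thus "integrable lborel (\<lambda>u. indicator {0<..} u * (exp (-(t*u)) * u powr (c-1)))"
    unfolding G_def .
  have "Gamma c = t * integral\<^sup>L lborel (\<lambda>x. F (0 + t * x))"
    using lborel_integral_real_affine[of t F 0] t Fv by simp
  also have "integral\<^sup>L lborel (\<lambda>x. F (0 + t * x)) = t powr (c - 1) * integral\<^sup>L lborel G"
    by (simp only: FG integral_mult_right_zero)
  finally have "integral\<^sup>L lborel G = Gamma c / (t * t powr (c - 1))" using t by (simp add: field_simps)
  also have "t * t powr (c - 1) = t powr c" using t by (simp add: powr_diff field_simps)
  finally show "integral\<^sup>L lborel (\<lambda>u. indicator {0<..} u * (exp (-(t*u)) * u powr (c-1))) = Gamma c / t powr c"
    unfolding G_def .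
qed



lemma exp_poly_bound:
  fixes c t :: real
  assumes t: "t > 0"
  obtains K where "K > 0" "\<And>u. u \<ge> 1 \<Longrightarrow> exp (-(t*u)) * u powr (c-1) \<le> K * exp (-((t/2)*u))"
proof -
  define p where "p = \<bar>c-1\<bar> + 1"
  have p: "p > 0" unfolding p_def by simp
  define K where "K = exp (p * (- ln (t/(2*p)) - 1))"
  have "K > 0" unfolding K_def by simp
  moreover have "exp (-(t*u)) * u powr (c-1) \<le> K * exp (-((t/2)*u))" if u: "u \<ge> 1" for u
  proof -
    have "u powr (c-1) \<le> u powr p" using u by (intro powr_mono) (auto simp: p_def)
    also have "\<dots> = exp (p * ln u)" using u by (simp add: powr_def)
    also have "\<dots> \<le> exp (t*u/2 + p * (- ln (t/(2*p)) - 1))"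
    proof -
      have "ln ((t/(2*p)) * u) \<le> (t/(2*p)) * u - 1"
        using t p u by (intro ln_le_minus_one) auto
      moreover have "ln ((t/(2*p)) * u) = ln (t/(2*p)) + ln u"
        using t p u by (intro ln_mult_pos) auto
      ultimately have "ln u \<le> (t/(2*p)) * u - 1 - ln (t/(2*p))" by simp
      hence "p * ln u \<le> p * ((t/(2*p)) * u - 1 - ln (t/(2*p)))"
        using p by (intro mult_left_mono) auto
      also have "\<dots> = t*u/2 + p * (- ln (t/(2*p)) - 1)" using p by (simp add: field_simps)
      finally show ?thesis by simp
    qed
    also have "\<dots> = exp (t*u/2) * K" unfolding K_def by (simp add: exp_add)
    finally have "u powr (c-1) \<le> exp (t*u/2) * K" .
    hence "exp (-(t*u)) * u powr (c-1) \<le> exp (-(t*u)) * (exp (t*u/2) * K)"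
      by (intro mult_left_mono) auto
    also have "\<dots> = K * exp (-((t/2)*u))"
      by (simp add: mult_ac exp_add[symmetric])
    finally show ?thesis .
  qed
  ultimately show ?thesis using that by blast
qed


lemma psi_half_integrable:
  fixes \<psi> :: "real \<Rightarrow> real" and t :: real
  assumes ld: "laplace_domain (\<lambda>u. complex_of_real (\<psi> u))" and t: "t > 0"
  shows "integrable lborel (\<lambda>u. indicator {0<..} u * (exp (-((t/2)*u)) * \<psi> u))"
proof -
  have "set_integrable lborel {0<..} (\<lambda>u. exp (- (complex_of_real (t/2) * complex_of_real u)) * complex_of_real (\<psi> u))"
  proof -
    have all: "\<forall>s::complex. Re s > 0 \<longrightarrow> set_integrable lborel {0<..} (\<lambda>u. exp (- (s * complex_of_real u)) * complex_of_real (\<psi> u))"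
      using ld unfolding laplace_domain_def by blast
    have "Re (complex_of_real (t/2)) > 0" using t by simp
    from all[rule_format, OF this] show ?thesis .
  qed
  hence "integrable lborel (\<lambda>u. Re (indicator {0<..} u *\<^sub>R (exp (- (complex_of_real (t/2) * complex_of_real u)) * complex_of_real (\<psi> u))))"
    unfolding set_integrable_def by (rule integrable_bounded_linear[OF bounded_linear_Re])
  moreover have "(\<lambda>u. Re (indicator {0<..} u *\<^sub>R (exp (- (complex_of_real (t/2) * complex_of_real u)) * complex_of_real (\<psi> u))))
     = (\<lambda>u. indicator {0<..} u * (exp (-((t/2)*u)) * \<psi> u))"
  proof
    fix u
    have "exp (- (complex_of_real (t/2) * complex_of_real u)) = complex_of_real (exp (-((t/2)*u)))"
      by (simp only: of_real_mult[symmetric] of_real_minus[symmetric] exp_of_real)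
    thus "Re (indicator {0<..} u *\<^sub>R (exp (- (complex_of_real (t/2) * complex_of_real u)) * complex_of_real (\<psi> u))) = indicator {0<..} u * (exp (-((t/2)*u)) * \<psi> u)"
      by simp
  qed
  ultimately show ?thesis by simp
qed

lemma psi_integrable:
  fixes \<psi> :: "real \<Rightarrow> real" and c t :: real
  assumes ld: "laplace_domain (\<lambda>u. complex_of_real (\<psi> u))"
    and nn: "\<forall>u>0. \<psi> u \<ge> 0" and mono: "mono_on {0<..} \<psi>" and c: "c > 0" and t: "t > 0"
  shows "integrable lborel (\<lambda>u. indicator {0<..} u * (\<psi> u * (exp (-(t*u)) * u powr (c-1))))"
proof -
  note h1 = psi_half_integrable[OF ld t]
  note h2 = gamma_laplace(1)[OF c t]
  obtain K where K: "K > 0" "\<And>u. u \<ge> 1 \<Longrightarrow> exp (-(t*u)) * u powr (c-1) \<le> K * exp (-((t/2)*u))"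
    using exp_poly_bound[OF t, of c] by blast
  have meq: "(\<lambda>u. indicator {0<..} u * (\<psi> u * (exp (-(t*u)) * u powr (c-1))))
     = (\<lambda>u. (indicator {0<..} u * (exp (-((t/2)*u)) * \<psi> u)) * (exp (-((t/2)*u)) * u powr (c-1)))"
  proof
    fix u
    have "exp (-(t*u)) = exp (-((t/2)*u)) * exp (-((t/2)*u))" by (simp add: exp_add[symmetric])
    thus "indicator {0<..} u * (\<psi> u * (exp (-(t*u)) * u powr (c-1))) = (indicator {0<..} u * (exp (-((t/2)*u)) * \<psi> u)) * (exp (-((t/2)*u)) * u powr (c-1))"
      by (simp add: mult_ac)
  qed
  have meas: "(\<lambda>u. indicator {0<..} u * (\<psi> u * (exp (-(t*u)) * u powr (c-1)))) \<in> borel_measurable lborel"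
    unfolding meq using borel_measurable_integrable[OF h1] by measurable
  show ?thesis
  proof (rule Bochner_Integration.integrable_bound[OF _ meas])
    show "integrable lborel (\<lambda>u. \<psi> 1 * (indicator {0<..} u * (exp (-(t*u)) * u powr (c-1))) + K * (indicator {0<..} u * (exp (-((t/2)*u)) * \<psi> u)))"
      using h1 h2 by simp
    show "AE u in lborel. norm (indicator {0<..} u * (\<psi> u * (exp (-(t*u)) * u powr (c-1))))
        \<le> norm (\<psi> 1 * (indicator {0<..} u * (exp (-(t*u)) * u powr (c-1))) + K * (indicator {0<..} u * (exp (-((t/2)*u)) * \<psi> u)))"
    proof (rule AE_I2)
      fix u :: real
      show "norm (indicator {0<..} u * (\<psi> u * (exp (-(t*u)) * u powr (c-1))))
        \<le> norm (\<psi> 1 * (indicator {0<..} u * (exp (-(t*u)) * u powr (c-1))) + K * (indicator {0<..} u * (exp (-((t/2)*u)) * \<psi> u)))"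
      proof (cases "u > 0")
        case False thus ?thesis by simp
      next
        case True
        have p1: "\<psi> 1 \<ge> 0" "\<psi> u \<ge> 0" using nn True by auto
        have e0: "exp (-(t*u)) * u powr (c-1) \<ge> 0" by simp
        have A: "\<psi> u * (exp (-(t*u)) * u powr (c-1)) \<le> \<psi> 1 * (exp (-(t*u)) * u powr (c-1)) + K * (exp (-((t/2)*u)) * \<psi> u)"
        proof (cases "u \<le> 1")
          case True
          hence "\<psi> u \<le> \<psi> 1" using mono \<open>u > 0\<close> by (auto intro: mono_onD)
          hence "\<psi> u * (exp (-(t*u)) * u powr (c-1)) \<le> \<psi> 1 * (exp (-(t*u)) * u powr (c-1))"
            by (intro mult_right_mono e0)
          moreover have "K * (exp (-((t/2)*u)) * \<psi> u) \<ge> 0" using K p1 by simp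
          ultimately show ?thesis by linarith
        next
          case False
          hence "\<psi> u * (exp (-(t*u)) * u powr (c-1)) \<le> \<psi> u * (K * exp (-((t/2)*u)))"
            using K(2)[of u] p1 by (intro mult_left_mono) auto
          moreover have "\<psi> 1 * (exp (-(t*u)) * u powr (c-1)) \<ge> 0" using p1 e0 by simp
          ultimately show ?thesis by (simp add: mult_ac)
        qed
        have B: "\<psi> u * (exp (-(t*u)) * u powr (c-1)) \<ge> 0" using p1 e0 by simp
        show ?thesis using A B True by simp
      qed
    qed
  qed
qed


lemma real_case:
  fixes \<psi> :: "real \<Rightarrow> real" and a \<sigma> t :: real
  assumes ld: "laplace_domain (\<lambda>u. complex_of_real (\<psi> u))"
    and nn: "\<forall>u>0. \<psi> u \<ge> 0" and mono: "mono_on {0<..} \<psi>"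
    and a: "0 < a" and as: "a < \<sigma>" and t: "t > 0"
  shows "integral\<^sup>L lborel (\<lambda>u. indicator {0<..} u * (\<psi> u * (exp (-(t*u)) * u powr (a-1))))
      \<le> (t powr (\<sigma>-a) * Gamma a / Gamma \<sigma>) *
         integral\<^sup>L lborel (\<lambda>u. indicator {0<..} u * (\<psi> u * (exp (-(t*u)) * u powr (\<sigma>-1))))"
proof -
  have sg: "\<sigma> > 0" using a as by simp
  define K0 where "K0 = t powr (\<sigma>-a) * Gamma a / Gamma \<sigma>"
  have K0: "K0 > 0" unfolding K0_def using a sg t by (simp add: Gamma_real_pos)
  define u0 where "u0 = (1/K0) powr (1/(\<sigma>-a))"
  have u0: "u0 > 0" unfolding u0_def using K0 by simp
  have u0p: "u0 powr (\<sigma>-a) = 1/K0" unfolding u0_def using K0 as by (simp add: powr_powr)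
  define Fa where "Fa u = indicator {0<..} u * (\<psi> u * (exp (-(t*u)) * u powr (a-1)))" for u
  define Fs where "Fs u = indicator {0<..} u * (\<psi> u * (exp (-(t*u)) * u powr (\<sigma>-1)))" for u
  define Ea where "Ea u = indicator {0<..} u * (exp (-(t*u)) * u powr (a-1))" for u :: real
  define Es where "Es u = indicator {0<..} u * (exp (-(t*u)) * u powr (\<sigma>-1))" for u :: real
  have iFa: "integrable lborel Fa" unfolding Fa_def by (rule psi_integrable[OF ld nn mono a t])
  have iFs: "integrable lborel Fs" unfolding Fs_def by (rule psi_integrable[OF ld nn mono sg t])
  have iEa: "integrable lborel Ea" unfolding Ea_def by (rule gamma_laplace(1)[OF a t])
  have iEs: "integrable lborel Es" unfolding Es_def by (rule gamma_laplace(1)[OF sg t])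
  have vEa: "integral\<^sup>L lborel Ea = Gamma a / t powr a" unfolding Ea_def by (rule gamma_laplace(2)[OF a t])
  have vEs: "integral\<^sup>L lborel Es = Gamma \<sigma> / t powr \<sigma>" unfolding Es_def by (rule gamma_laplace(2)[OF sg t])
  have bal: "K0 * (Gamma \<sigma> / t powr \<sigma>) = Gamma a / t powr a"
  proof -
    have gs: "Gamma \<sigma> \<noteq> 0" using Gamma_real_pos[OF sg] by simp
    show ?thesis unfolding K0_def using t gs by (simp add: powr_diff field_simps)
  qed
  define h where "h u = K0 * Fs u - Fa u - \<psi> u0 * K0 * Es u + \<psi> u0 * Ea u" for u
  have hnn: "h u \<ge> 0" for u
  proof (cases "u > 0")
    case False thus ?thesis by (simp add: h_def Fa_def Fs_def Ea_def Es_def)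
  next
    case True
    have hu: "h u = exp (-(t*u)) * (\<psi> u - \<psi> u0) * (K0 * u powr (\<sigma>-1) - u powr (a-1))"
      using True by (simp add: h_def Fa_def Fs_def Ea_def Es_def algebra_simps)
    have split: "K0 * u powr (\<sigma>-1) - u powr (a-1) = u powr (a-1) * (K0 * u powr (\<sigma>-a) - 1)"
      using True by (simp add: algebra_simps powr_add[symmetric])
    have "(\<psi> u - \<psi> u0) * (K0 * u powr (\<sigma>-a) - 1) \<ge> 0"
    proof (cases "u \<ge> u0")
      case True
      have "\<psi> u0 \<le> \<psi> u" using mono True u0 by (auto intro: mono_onD)
      moreover have "u0 powr (\<sigma>-a) \<le> u powr (\<sigma>-a)" using True u0 as by (intro powr_mono2) auto
      hence "K0 * u powr (\<sigma>-a) \<ge> 1" using K0 u0p by (simp add: field_simps)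
      ultimately show ?thesis by simp
    next
      case False
      have "\<psi> u \<le> \<psi> u0" using mono False \<open>u > 0\<close> u0 by (auto intro: mono_onD)
      moreover have "u powr (\<sigma>-a) \<le> u0 powr (\<sigma>-a)" using False \<open>u > 0\<close> as by (intro powr_mono2) auto
      hence "K0 * u powr (\<sigma>-a) \<le> 1" using K0 u0p by (simp add: field_simps)
      ultimately show ?thesis by (simp add: mult_nonpos_nonpos)
    qed
    hence "exp (-(t*u)) * u powr (a-1) * ((\<psi> u - \<psi> u0) * (K0 * u powr (\<sigma>-a) - 1)) \<ge> 0"
      by simp
    thus ?thesis unfolding hu split by (simp add: mult_ac)
  qed
  have "0 \<le> integral\<^sup>L lborel h" by (rule integral_nonneg_AE) (simp add: hnn)
  also have "integral\<^sup>L lborel h = K0 * integral\<^sup>L lborel Fs - integral\<^sup>L lborel Fa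
       - \<psi> u0 * K0 * integral\<^sup>L lborel Es + \<psi> u0 * integral\<^sup>L lborel Ea"
    unfolding h_def using iFa iFs iEa iEs by simp
  also have "\<dots> = K0 * integral\<^sup>L lborel Fs - integral\<^sup>L lborel Fa"
  proof -
    have "\<psi> u0 * K0 * integral\<^sup>L lborel Es = \<psi> u0 * integral\<^sup>L lborel Ea"
      using bal by (simp only: vEa vEs mult.assoc)
    thus ?thesis by linarith
  qed
  finally show ?thesis unfolding Fa_def Fs_def K0_def by simp
qed


lemma C_bound:
  fixes s :: complex and s0 :: real
  assumes a: "0 < Re s"
  shows "Gamma (Re s) / norm (Gamma s) \<le> C_const s s0"
proof -
  define a b where "a = Re s" and "b = Im s"
  have s: "s = Complex a b" unfolding a_def b_def by simp
  have a0: "a > 0" using a a_def by simp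
  have sq: "(Gamma a / norm (Gamma s))^2 \<le> (1 + b^2/a^2) * sinhc b"
    using gamma_ratio_bound[OF a0, of b] s by simp
  have nn: "Gamma a / norm (Gamma s) \<ge> 0" using Gamma_real_pos[OF a0] by simp
  have sh: "sinhc b \<ge> 1" by (rule sinhc_ge1)
  have q1: "1 + b^2/a^2 \<ge> 1" by simp
  have "Gamma a / norm (Gamma s) \<le> sqrt ((1 + b^2/a^2) * sinhc b)"
    using sq nn by (simp add: real_le_rsqrt)
  also have "\<dots> = sqrt (1 + b^2/a^2) * sqrt (sinhc b)" by (simp add: real_sqrt_mult)
  also have "sqrt (sinhc b) \<le> sinhc b"
  proof -
    have "sqrt (sinhc b) \<le> sqrt (sinhc b) * sqrt (sinhc b)"
      using sh by (intro mult_le_cancel_left1[THEN iffD2]) auto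
    also have "\<dots> = sinhc b" using sh by simp
    finally show ?thesis .
  qed
  hence "sqrt (1 + b^2/a^2) * sqrt (sinhc b) \<le> sqrt (1 + b^2/a^2) * sinhc b"
    by (intro mult_left_mono) auto
  also have "sqrt (1 + b^2/a^2) \<le> sqrt ((1 + b^2/a^2) * (1 + b^2 / (Re (complex_of_real s0 - s))^2))"
  proof (rule real_sqrt_le_mono)
    have X: "0 \<le> b^2 / (Re (complex_of_real s0 - s))^2" by simp
    have Q: "0 \<le> b^2/a^2" by simp
    have "0 \<le> (1 + b^2/a^2) * (b^2 / (Re (complex_of_real s0 - s))^2)"
      using Q X by (intro mult_nonneg_nonneg) auto
    thus "1 + b^2/a^2 \<le> (1 + b^2/a^2) * (1 + b^2 / (Re (complex_of_real s0 - s))^2)"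
      by (simp only: distrib_left mult_1_right)
  qed
  hence "sqrt (1 + b^2/a^2) * sinhc b \<le> sqrt ((1 + b^2/a^2) * (1 + b^2 / (Re (complex_of_real s0 - s))^2)) * sinhc b"
    using sh by (intro mult_right_mono) auto
  finally show ?thesis unfolding C_const_def a_def b_def by (simp add: mult_ac)
qed

theorem mainTheorem1:
  fixes \<psi> :: "real \<Rightarrow> real" and s0 t :: real and s :: complex
  assumes "laplace_domain (\<lambda>u. complex_of_real (\<psi> u))"
    and "\<forall>u>0. \<psi> u \<ge> 0"
    and "mono_on {0<..} \<psi>"
    and "s0 > 0" and "0 < Re s" and "Re s < s0"
    and "t > 0"
  shows "norm (laplace (\<lambda>u. complex_of_real (\<psi> u) * (complex_of_real u powr (s - 1)) / Gamma s) t)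
     \<le> C_const s s0 * t powr (Re (complex_of_real s0 - s)) *
        laplace (\<lambda>u. \<psi> u * u powr (s0 - 1) / Gamma s0) t"
proof -
  note ld = assms(1) and nn = assms(2) and mono = assms(3) and a = assms(5) and as = assms(6) and t = assms(7)
  define a where "a = Re s"
  have a0: "a > 0" using a a_def by simp
  have sg: "s0 > 0" by fact
  define Ia where "Ia = integral\<^sup>L lborel (\<lambda>u. indicator {0<..} u * (\<psi> u * (exp (-(t*u)) * u powr (a-1))))"
  define Is where "Is = integral\<^sup>L lborel (\<lambda>u. indicator {0<..} u * (\<psi> u * (exp (-(t*u)) * u powr (s0-1))))"
  have Isnn: "Is \<ge> 0" unfolding Is_def using nn
    by (intro integral_nonneg_AE AE_I2) (auto simp: indicator_def)
  have snp: "s \<notin> \<int>\<^sub>\<le>\<^sub>0" using a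
    by (auto elim!: nonpos_Ints_cases simp: complex_eq_iff)
  have Gs: "Gamma s \<noteq> 0" using snp by (simp add: Gamma_eq_zero_iff)
  have L1: "norm (laplace (\<lambda>u. complex_of_real (\<psi> u) * (complex_of_real u powr (s - 1)) / Gamma s) t)
      \<le> Ia / norm (Gamma s)"
  proof -
    have "norm (laplace (\<lambda>u. complex_of_real (\<psi> u) * (complex_of_real u powr (s - 1)) / Gamma s) t)
        \<le> integral\<^sup>L lborel (\<lambda>u. norm (indicator {0<..} u *\<^sub>R (exp (-(t*u)) *\<^sub>R (complex_of_real (\<psi> u) * (complex_of_real u powr (s - 1)) / Gamma s))))"
      unfolding laplace_def set_lebesgue_integral_def by (rule integral_norm_bound)
    also have "(\<lambda>u. norm (indicator {0<..} u *\<^sub>R (exp (-(t*u)) *\<^sub>R (complex_of_real (\<psi> u) * (complex_of_real u powr (s - 1)) / Gamma s))))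
        = (\<lambda>u. indicator {0<..} u * (\<psi> u * (exp (-(t*u)) * u powr (a-1))) / norm (Gamma s))"
    proof
      fix u :: real
      show "norm (indicator {0<..} u *\<^sub>R (exp (-(t*u)) *\<^sub>R (complex_of_real (\<psi> u) * (complex_of_real u powr (s - 1)) / Gamma s)))
          = indicator {0<..} u * (\<psi> u * (exp (-(t*u)) * u powr (a-1))) / norm (Gamma s)"
      proof (cases "u > 0")
        case False thus ?thesis by simp
      next
        case True
        have "norm (complex_of_real u powr (s - 1)) = u powr (a - 1)"
          using True by (subst norm_powr_real_powr) (auto simp: a_def)
        thus ?thesis using True nn by (simp add: norm_mult norm_divide abs_mult)
      qed
    qed
    also have "integral\<^sup>L lborel (\<lambda>u. indicator {0<..} u * (\<psi> u * (exp (-(t*u)) * u powr (a-1))) / norm (Gamma s))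
        = Ia / norm (Gamma s)" unfolding Ia_def by simp
    finally show ?thesis .
  qed
  have L2: "Ia \<le> (t powr (s0-a) * Gamma a / Gamma s0) * Is"
    unfolding Ia_def Is_def by (rule real_case[OF ld nn mono a0 _ t]) (use as a_def in simp)
  have L3: "laplace (\<lambda>u. \<psi> u * u powr (s0 - 1) / Gamma s0) t = Is / Gamma s0"
  proof -
    have "laplace (\<lambda>u. \<psi> u * u powr (s0 - 1) / Gamma s0) t
        = integral\<^sup>L lborel (\<lambda>u. indicator {0<..} u * (\<psi> u * (exp (-(t*u)) * u powr (s0-1))) / Gamma s0)"
      unfolding laplace_def set_lebesgue_integral_def by (simp add: mult_ac)
    thus ?thesis unfolding Is_def by simp
  qed
  have C: "Gamma a / norm (Gamma s) \<le> C_const s s0" unfolding a_def by (rule C_bound[OF a])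
  have Gp: "Gamma s0 > 0" "Gamma a > 0" using Gamma_real_pos sg a0 by auto
  have "Ia / norm (Gamma s) \<le> (t powr (s0-a) * Gamma a / Gamma s0) * Is / norm (Gamma s)"
    using L2 Gs by (intro divide_right_mono) auto
  also have "\<dots> = (Gamma a / norm (Gamma s)) * (t powr (s0-a) * (Is / Gamma s0))" by (simp add: mult_ac)
  also have "\<dots> \<le> C_const s s0 * (t powr (s0-a) * (Is / Gamma s0))"
    using C Isnn Gp by (intro mult_right_mono) auto
  finally show ?thesis using L1 L3 unfolding a_def by (simp add: mult_ac)
qed

end
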